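(* Let $\prec$ be a monomial order on $\langle x,x^*\rangle$ and let $I\subseteq\mathbb F\langle x,x^*\rangle$ be a $*$-ideal generated (as a $*$-ideal) by some nonzero analytic polynomials. Then the reduced Gröbner basis of $I$ with respect to $\prec$ is of the form $G\cup H^*$, where $G$ and $H$ consist entirely of analytic polynomials (and $H^*=\{h^*:h\in H\}$).
   Context: $\mathbb F\in\{\mathbb R,\mathbb C\}$. $\langle x,x^*\rangle$ is the free monoid of words in the letters $x_1,\dots,x_g,x_1^*,\dots,x_g^*$, and $\mathbb F\langle x,x^*\rangle$ the free $*$-algebra of polynomials in these letters (involution conjugates coefficients, reverses words, swaps $x_j\leftrightarrow x_j^*$). A polynomial is analytic if it contains no letter $x_j^*$. A $*$-ideal is a two-sided ideal with $I^*=I$. A monomial order is a total order $\prec$ on $\langle x,x^*\rangle$ that is a well-ordering and satisfies $a\prec b\Rightarrow ca\prec cb$ and $ac\prec bc$ for all words $c$. For nonzero $p=\sum_{i=1}^s c_it_i$ with $c_i\ne0$ and words $t_1\succ\dots\succ t_s$, $T(p)=t_1$ is the leading monomial and $c_1$ the leading coefficient; $p$ is monic if $c_1=1$. A word $a$ divides $b$ if $b=cad$ for words $c,d$. A reduced Gröbner basis of a two-sided ideal $I$ is a set $G\subseteq I$ such that: for each nonzero $f\in I$ some $g\in G$ has $T(g)$ dividing $T(f)$; every element of $G$ is monic; and for distinct $g_1,g_2\in G$, $T(g_1)$ divides no word appearing in $g_2$. Every two-sided ideal has a unique reduced Gröbner basis. *)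

theory Defs
  imports Complex_Main
begin

text \<open>Letters of the free *-monoid: (v, False) is x_v, (v, True) is x_v^*.
  The variable type 'v is finite (the g variables). Words are lists of letters.\<close>

type_synonym 'v word = "('v \<times> bool) list"

definition supp :: "('v word \<Rightarrow> 'a::zero) \<Rightarrow> 'v word set" where
  "supp p = {w. p w \<noteq> 0}"

definition polys :: "('v word \<Rightarrow> 'a::zero) set" where
  "polys = {p. finite (supp p)}"

definition pzero :: "'v word \<Rightarrow> 'a::zero" where
  "pzero = (\<lambda>w. 0)"

definition padd :: "('v word \<Rightarrow> 'a::plus) \<Rightarrow> ('v word \<Rightarrow> 'a) \<Rightarrow> 'v word \<Rightarrow> 'a" where
  "padd p q = (\<lambda>w. p w + q w)"

definition pmult :: "('v word \<Rightarrow> 'a::comm_ring_1) \<Rightarrow> ('v word \<Rightarrow> 'a) \<Rightarrow> 'v word \<Rightarrow> 'a" where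
  "pmult p q = (\<lambda>w. \<Sum>(u, v) \<in> {(u, v). u @ v = w}. p u * q v)"

definition star_letter :: "'v \<times> bool \<Rightarrow> 'v \<times> bool" where
  "star_letter l = (fst l, \<not> snd l)"

definition wstar :: "'v word \<Rightarrow> 'v word" where
  "wstar w = rev (map star_letter w)"

definition pstar :: "('a \<Rightarrow> 'a) \<Rightarrow> ('v word \<Rightarrow> 'a) \<Rightarrow> 'v word \<Rightarrow> 'a" where
  "pstar cj p = (\<lambda>w. cj (p (wstar w)))"

definition is_ideal :: "('v word \<Rightarrow> 'a::comm_ring_1) set \<Rightarrow> bool" where
  "is_ideal I \<longleftrightarrow> I \<subseteq> polys \<and> pzero \<in> I \<and>
     (\<forall>p\<in>I. \<forall>q\<in>I. padd p q \<in> I) \<and>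
     (\<forall>p\<in>I. \<forall>a\<in>polys. \<forall>b\<in>polys. pmult (pmult a p) b \<in> I)"

definition is_star_ideal :: "('a \<Rightarrow> 'a) \<Rightarrow> ('v word \<Rightarrow> 'a::comm_ring_1) set \<Rightarrow> bool" where
  "is_star_ideal cj I \<longleftrightarrow> is_ideal I \<and> pstar cj ` I \<subseteq> I"

definition star_ideal_generated ::
  "('a \<Rightarrow> 'a) \<Rightarrow> ('v word \<Rightarrow> 'a::comm_ring_1) set \<Rightarrow> ('v word \<Rightarrow> 'a) set" where
  "star_ideal_generated cj S = \<Inter> {I. is_star_ideal cj I \<and> S \<subseteq> I}"

definition analytic_poly :: "('v word \<Rightarrow> 'a::zero) \<Rightarrow> bool" where
  "analytic_poly p \<longleftrightarrow> (\<forall>w\<in>supp p. \<forall>l\<in>set w. \<not> snd l)"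

definition monomial_order :: "('v word \<Rightarrow> 'v word \<Rightarrow> bool) \<Rightarrow> bool" where
  "monomial_order lt \<longleftrightarrow>
     (\<forall>a. \<not> lt a a) \<and>
     (\<forall>a b c. lt a b \<longrightarrow> lt b c \<longrightarrow> lt a c) \<and>
     (\<forall>a b. a \<noteq> b \<longrightarrow> lt a b \<or> lt b a) \<and>
     wfP lt \<and>
     (\<forall>a b c. lt a b \<longrightarrow> lt (c @ a) (c @ b) \<and> lt (a @ c) (b @ c))"

definition lm :: "('v word \<Rightarrow> 'v word \<Rightarrow> bool) \<Rightarrow> ('v word \<Rightarrow> 'a::zero) \<Rightarrow> 'v word" where
  "lm lt p = (THE t. t \<in> supp p \<and> (\<forall>s\<in>supp p. s \<noteq> t \<longrightarrow> lt s t))"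

definition monic :: "('v word \<Rightarrow> 'v word \<Rightarrow> bool) \<Rightarrow> ('v word \<Rightarrow> 'a::{zero,one}) \<Rightarrow> bool" where
  "monic lt p \<longleftrightarrow> p \<noteq> pzero \<and> p (lm lt p) = 1"

definition word_dvd :: "'v word \<Rightarrow> 'v word \<Rightarrow> bool" where
  "word_dvd a b \<longleftrightarrow> (\<exists>c d. b = c @ a @ d)"

definition reduced_groebner_basis ::
  "('v word \<Rightarrow> 'v word \<Rightarrow> bool) \<Rightarrow> ('v word \<Rightarrow> 'a::comm_ring_1) set \<Rightarrow> ('v word \<Rightarrow> 'a) set \<Rightarrow> bool" where
  "reduced_groebner_basis lt I G \<longleftrightarrow>
     G \<subseteq> I \<and>
     (\<forall>f\<in>I. f \<noteq> pzero \<longrightarrow> (\<exists>g\<in>G. word_dvd (lm lt g) (lm lt f))) \<and>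
     (\<forall>g\<in>G. monic lt g) \<and>
     (\<forall>g1\<in>G. \<forall>g2\<in>G. g1 \<noteq> g2 \<longrightarrow> (\<forall>w\<in>supp g2. \<not> word_dvd (lm lt g1) w))"

end

theory Submission
  imports Defs
begin

definition dl :: "'v word \<Rightarrow> 'v word \<Rightarrow> 'a::{zero,one}" where
  "dl w = (\<lambda>u. if u = w then 1 else 0)"

definition smult :: "'a::times \<Rightarrow> ('v word \<Rightarrow> 'a) \<Rightarrow> 'v word \<Rightarrow> 'a" where
  "smult c f = (\<lambda>w. c * f w)"

definition lc :: "('v word \<Rightarrow> 'a::comm_ring_1) \<Rightarrow> ('v word \<Rightarrow> 'v word \<Rightarrow> 'a) \<Rightarrow> 'v word \<Rightarrow> 'a" where
  "lc f \<Psi> = (\<lambda>x. \<Sum>u\<in>supp f. f u * \<Psi> u x)"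

lemma supp_iff: "w \<in> supp f \<longleftrightarrow> f w \<noteq> 0" by (simp add: supp_def)

lemma lc_superset:
  assumes "finite A" "supp f \<subseteq> A"
  shows "lc f \<Psi> x = (\<Sum>u\<in>A. f u * \<Psi> u x)"
  unfolding lc_def
  by (rule sum.mono_neutral_left) (use assms in \<open>auto simp: supp_iff\<close>)

lemma lc_add:
  assumes "finite (supp f)" "finite (supp g)"
  shows "lc (padd f g) \<Psi> = padd (lc f \<Psi>) (lc g \<Psi>)"
proof -
  have s: "supp (padd f g) \<subseteq> supp f \<union> supp g" by (auto simp: supp_iff padd_def)
  show ?thesis
    apply (rule ext)
    apply (subst lc_superset[of "supp f \<union> supp g"], use assms s in auto)
    apply (simp add: padd_def)
    apply (subst (1 2) lc_superset[of "supp f \<union> supp g"], use assms in auto)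
    by (simp add: sum.distrib distrib_right)
qed

lemma lc_smult:
  assumes "finite (supp f)"
  shows "lc (smult c f) \<Psi> = smult c (lc f \<Psi>)"
proof -
  have s: "supp (smult c f) \<subseteq> supp f" by (auto simp: supp_iff smult_def)
  show ?thesis
    apply (rule ext)
    apply (subst lc_superset[of "supp f"], use assms s in auto)
    apply (simp add: smult_def lc_def sum_distrib_left mult.assoc)
    done
qed

lemma lc_dl: "lc (dl w) \<Psi> = (\<Psi> w :: _ \<Rightarrow> 'a::comm_ring_1)"
  apply (rule ext)
  apply (subst lc_superset[of "{w}"])
  by (auto simp: supp_iff dl_def split: if_splits)

lemma lc_self:
  assumes "finite (supp f)"
  shows "lc f dl = f"
proof (rule ext)
  fix x
  show "lc f dl x = f x"
  proof (cases "x \<in> supp f")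
    case True
    then show ?thesis unfolding lc_def dl_def
      by (simp add: assms if_distrib cong: if_cong)
  next
    case False
    then show ?thesis unfolding lc_def dl_def
      by (auto simp: supp_iff intro!: sum.neutral)
  qed
qed

lemma supp_lc: "supp (lc f \<Psi>) \<subseteq> (\<Union>u\<in>supp f. supp (\<Psi> u))"
proof
  fix x assume "x \<in> supp (lc f \<Psi>)"
  then have "(\<Sum>u\<in>supp f. f u * \<Psi> u x) \<noteq> 0" by (simp add: supp_iff lc_def)
  then obtain u where "u \<in> supp f" "f u * \<Psi> u x \<noteq> 0" by (meson sum.neutral)
  then show "x \<in> (\<Union>u\<in>supp f. supp (\<Psi> u))" by (intro UN_I[of u]) (auto simp: supp_iff)
qed

lemma finite_lc:
  assumes "finite (supp f)" "\<And>u. u \<in> supp f \<Longrightarrow> finite (supp (\<Psi> u))"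
  shows "finite (supp (lc f \<Psi>))"
  using supp_lc[of f \<Psi>] assms by (meson finite_UN_I finite_subset)

lemma lc_cong: "(\<And>u. u \<in> supp f \<Longrightarrow> \<Psi> u = \<Phi> u) \<Longrightarrow> lc f \<Psi> = lc f \<Phi>"
  unfolding lc_def by (auto intro!: ext sum.cong)

lemma lc_lc:
  assumes "finite (supp f)" "\<And>u. u \<in> supp f \<Longrightarrow> finite (supp (\<Psi> u))"
  shows "lc (lc f \<Psi>) \<Theta> = lc f (\<lambda>u. lc (\<Psi> u) \<Theta>)"
proof (rule ext)
  fix x
  define A where "A = (\<Union>u\<in>supp f. supp (\<Psi> u))"
  have fA: "finite A" using assms by (auto simp: A_def)
  have "lc (lc f \<Psi>) \<Theta> x = (\<Sum>y\<in>A. lc f \<Psi> y * \<Theta> y x)"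
    by (rule lc_superset) (use fA supp_lc in \<open>auto simp: A_def\<close>)
  also have "\<dots> = (\<Sum>y\<in>A. \<Sum>u\<in>supp f. f u * \<Psi> u y * \<Theta> y x)"
    by (simp add: lc_def sum_distrib_right)
  also have "\<dots> = (\<Sum>u\<in>supp f. \<Sum>y\<in>A. f u * \<Psi> u y * \<Theta> y x)"
    by (rule sum.swap)
  also have "\<dots> = (\<Sum>u\<in>supp f. f u * lc (\<Psi> u) \<Theta> x)"
  proof (rule sum.cong[OF refl])
    fix u assume u: "u \<in> supp f"
    have "lc (\<Psi> u) \<Theta> x = (\<Sum>y\<in>A. \<Psi> u y * \<Theta> y x)"
      by (rule lc_superset) (use fA u in \<open>auto simp: A_def\<close>)
    then show "(\<Sum>y\<in>A. f u * \<Psi> u y * \<Theta> y x) = f u * lc (\<Psi> u) \<Theta> x"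
      by (simp add: sum_distrib_left mult.assoc)
  qed
  also have "\<dots> = lc f (\<lambda>u. lc (\<Psi> u) \<Theta>) x" by (simp add: lc_def)
  finally show "lc (lc f \<Psi>) \<Theta> x = lc f (\<lambda>u. lc (\<Psi> u) \<Theta>) x" .
qed

lemma lc_swap:
  "lc f (\<lambda>u. lc g (\<lambda>w. \<Theta> u w)) = lc g (\<lambda>w. lc f (\<lambda>u. \<Theta> u w))"
  unfolding lc_def
  by (rule ext) (simp add: sum_distrib_left mult.left_commute sum.swap[of _ "supp f"])

lemma lc_pzero: "lc pzero \<Psi> = pzero"
  by (simp add: lc_def pzero_def supp_def)

lemma lc_to_pzero: "lc f (\<lambda>u. pzero) = pzero"
  by (simp add: lc_def pzero_def)

lemma lc_to_pzero': "(\<And>u. u \<in> supp f \<Longrightarrow> \<Psi> u = pzero) \<Longrightarrow> lc f \<Psi> = pzero"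
  using lc_cong[of f \<Psi> "\<lambda>u. pzero"] lc_to_pzero by metis

lemma splits_eq: "{(u, v). u @ v = w} = (\<lambda>i. (take i w, drop i w)) ` {..length w}"
proof (rule set_eqI, rule iffI)
  fix x assume "x \<in> {(u, v). u @ v = w}"
  then obtain u v where x: "x = (u,v)" "u @ v = w" by auto
  then show "x \<in> (\<lambda>i. (take i w, drop i w)) ` {..length w}"
    by (auto intro!: image_eqI[where x="length u"])
qed auto

lemma finite_splits: "finite {(u, v). u @ v = w}"
  by (simp add: splits_eq)

lemma pmult_lc:
  assumes "finite (supp f)" "finite (supp g)"
  shows "pmult f g = lc f (\<lambda>u. lc g (\<lambda>v. dl (u @ v)))"
proof (rule ext)
  fix x
  have "pmult f g x = (\<Sum>(u, v)\<in>{(u, v). u @ v = x}. f u * g v)" by (simp add: pmult_def)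
  also have "\<dots> = (\<Sum>(u, v)\<in>{(u, v). u @ v = x} \<inter> (supp f \<times> supp g). f u * g v)"
    by (rule sum.mono_neutral_right) (auto simp: finite_splits supp_iff)
  also have "\<dots> = (\<Sum>(u, v)\<in>supp f \<times> supp g. if u @ v = x then f u * g v else 0)"
    by (subst Int_commute, subst sum.inter_restrict) (auto simp: assms intro!: sum.cong)
  also have "\<dots> = (\<Sum>u\<in>supp f. \<Sum>v\<in>supp g. if u @ v = x then f u * g v else 0)"
    by (rule sum.cartesian_product[symmetric])
  also have "\<dots> = lc f (\<lambda>u. lc g (\<lambda>v. dl (u @ v))) x"
    by (auto simp: lc_def dl_def sum_distrib_left if_distrib intro!: sum.cong)
  finally show "pmult f g x = lc f (\<lambda>u. lc g (\<lambda>v. dl (u @ v))) x" .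
qed



definition psub :: "('v word \<Rightarrow> 'a::minus) \<Rightarrow> ('v word \<Rightarrow> 'a) \<Rightarrow> 'v word \<Rightarrow> 'a" where
  "psub p q = (\<lambda>w. p w - q w)"

lemma supp_dl: "supp (dl w :: _ \<Rightarrow> 'a::{zero,one}) \<subseteq> {w}"
  by (auto simp: supp_iff dl_def split: if_splits)

lemma finite_dl[simp]: "finite (supp (dl w :: _ \<Rightarrow> 'a::{zero,one}))"
  using supp_dl finite_subset by blast

lemma dl_polys[simp]: "(dl w :: _ \<Rightarrow> 'a::{zero,one}) \<in> polys"
  by (simp add: polys_def)

lemma supp_padd: "supp (padd f g :: _ \<Rightarrow> 'a::comm_ring_1) \<subseteq> supp f \<union> supp g"
  by (auto simp: supp_iff padd_def)
lemma supp_psub: "supp (psub f g :: _ \<Rightarrow> 'a::comm_ring_1) \<subseteq> supp f \<union> supp g"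
  by (auto simp: supp_iff psub_def)
lemma supp_smult: "supp (smult c f :: _ \<Rightarrow> 'a::comm_ring_1) \<subseteq> supp f"
  by (auto simp: supp_iff smult_def)
lemma supp_pzero[simp]: "supp pzero = {}"
  by (auto simp: supp_iff pzero_def)

lemma finite_padd: "finite (supp (f :: _ \<Rightarrow> 'a::comm_ring_1)) \<Longrightarrow> finite (supp g) \<Longrightarrow> finite (supp (padd f g))"
  using supp_padd finite_subset by (metis finite_Un)
lemma finite_psub: "finite (supp (f :: _ \<Rightarrow> 'a::comm_ring_1)) \<Longrightarrow> finite (supp g) \<Longrightarrow> finite (supp (psub f g))"
  using supp_psub finite_subset by (metis finite_Un)
lemma finite_smult: "finite (supp (f :: _ \<Rightarrow> 'a::comm_ring_1)) \<Longrightarrow> finite (supp (smult c f))"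
  using supp_smult finite_subset by metis

lemma finite_pmult:
  fixes f g :: "'v word \<Rightarrow> 'a::comm_ring_1"
  assumes "finite (supp f)" "finite (supp g)"
  shows "finite (supp (pmult f g))"
  unfolding pmult_lc[OF assms] by (intro finite_lc assms) auto

lemma pmult_dl_left:
  fixes g :: "'v word \<Rightarrow> 'a::comm_ring_1"
  assumes "finite (supp g)"
  shows "pmult (dl []) g = g"
  by (simp add: pmult_lc assms lc_dl lc_self)

lemma pmult_dl_right:
  fixes f :: "'v word \<Rightarrow> 'a::comm_ring_1"
  assumes "finite (supp f)"
  shows "pmult f (dl d) = lc f (\<lambda>u. dl (u @ d))"
  by (simp add: pmult_lc assms lc_dl)

lemma pmult_smult_left:
  fixes g :: "'v word \<Rightarrow> 'a::comm_ring_1"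
  assumes "finite (supp g)"
  shows "pmult (smult c (dl [])) g = smult c g"
  using assms by (simp add: pmult_lc lc_smult lc_dl lc_self finite_smult)

lemma pmult_shift:
  fixes p :: "'v word \<Rightarrow> 'a::comm_ring_1"
  assumes "finite (supp p)"
  shows "pmult (pmult (dl c) p) (dl d) = lc p (\<lambda>u. dl (c @ u @ d))"
proof -
  have "pmult (dl c) p = lc p (\<lambda>v. dl (c @ v))"
    by (simp add: pmult_lc assms lc_dl)
  moreover have "finite (supp (lc p (\<lambda>v. dl (c @ v))))"
    by (intro finite_lc assms) auto
  ultimately show ?thesis
    using assms by (simp add: pmult_dl_right lc_lc lc_dl)
qed



context
  fixes I :: "('v word \<Rightarrow> 'a::comm_ring_1) set"
  assumes I: "is_ideal I"
begin

lemma I_polys: "p \<in> I \<Longrightarrow> finite (supp p)"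
  using I by (auto simp: is_ideal_def polys_def)

lemma I_pzero: "pzero \<in> I" using I by (simp add: is_ideal_def)

lemma I_padd: "p \<in> I \<Longrightarrow> q \<in> I \<Longrightarrow> padd p q \<in> I" using I by (simp add: is_ideal_def)

lemma I_mult: "p \<in> I \<Longrightarrow> a \<in> polys \<Longrightarrow> b \<in> polys \<Longrightarrow> pmult (pmult a p) b \<in> I"
  using I by (simp add: is_ideal_def)

lemma I_smult: "p \<in> I \<Longrightarrow> smult c p \<in> I"
proof -
  assume p: "p \<in> I"
  have "pmult (pmult (smult c (dl [])) p) (dl []) \<in> I"
    by (rule I_mult[OF p]) (auto simp: polys_def finite_smult)
  moreover have "pmult (pmult (smult c (dl [])) p) (dl []) = smult c p"
    using I_polys[OF p]
    by (simp add: pmult_smult_left pmult_dl_right finite_smult lc_self)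
  ultimately show ?thesis by simp
qed

lemma I_psub: "p \<in> I \<Longrightarrow> q \<in> I \<Longrightarrow> psub p q \<in> I"
proof -
  assume "p \<in> I" "q \<in> I"
  then have "padd p (smult (-1) q) \<in> I" by (simp add: I_padd I_smult)
  moreover have "padd p (smult (-1) q) = psub p q"
    by (auto simp: padd_def smult_def psub_def)
  ultimately show ?thesis by simp
qed

lemma I_shift: "p \<in> I \<Longrightarrow> lc p (\<lambda>u. dl (c @ u @ d)) \<in> I"
  using I_mult[of p "dl c" "dl d"] pmult_shift[of p c d] I_polys by auto

lemma I_sum: "finite A \<Longrightarrow> (\<And>u. u \<in> A \<Longrightarrow> \<Psi> u \<in> I) \<Longrightarrow> (\<lambda>x. \<Sum>u\<in>A. c u * \<Psi> u x) \<in> I"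
proof (induction A rule: finite_induct)
  case empty
  then show ?case using I_pzero by (simp add: pzero_def)
next
  case (insert a A)
  have "padd (smult (c a) (\<Psi> a)) (\<lambda>x. \<Sum>u\<in>A. c u * \<Psi> u x) \<in> I"
    using insert by (intro I_padd I_smult) auto
  then show ?case using insert by (simp add: padd_def smult_def)
qed

lemma I_lc: "finite (supp f) \<Longrightarrow> (\<And>u. u \<in> supp f \<Longrightarrow> \<Psi> u \<in> I) \<Longrightarrow> lc f \<Psi> \<in> I"
  unfolding lc_def by (rule I_sum)

end



lemma word_dvd_refl[simp]: "word_dvd a a"
  unfolding word_dvd_def by (rule exI[of _ "[]"], rule exI[of _ "[]"]) simp

lemma word_dvd_trans: "word_dvd a b \<Longrightarrow> word_dvd b c \<Longrightarrow> word_dvd a c"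
  unfolding word_dvd_def by (elim exE) (rename_tac c1 d1 c2 d2, rule_tac x="c2 @ c1" in exI, rule_tac x="d1 @ d2" in exI, simp)

lemma word_dvd_length: "word_dvd a b \<Longrightarrow> length a \<le> length b"
  unfolding word_dvd_def by auto

lemma word_dvd_antisym: "word_dvd a b \<Longrightarrow> word_dvd b a \<Longrightarrow> a = b"
proof -
  assume "word_dvd a b" "word_dvd b a"
  then obtain c d c' d' where 1: "b = c @ a @ d" and 2: "a = c' @ b @ d'"
    unfolding word_dvd_def by blast
  have l1: "length b = length c + length a + length d" using 1 by simp
  have l2: "length a = length c' + length b + length d'" using 2 by simp
  from l1 l2 have "length c = 0 \<and> length d = 0" by linarith
  then show ?thesis using 1 by simp
qed

lemma word_dvd_nil[simp]: "word_dvd [] a"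
  unfolding word_dvd_def by auto

lemma pzero_iff: "p = pzero \<longleftrightarrow> supp p = {}"
  by (auto simp: supp_iff pzero_def fun_eq_iff)

context
  fixes lt :: "'v word \<Rightarrow> 'v word \<Rightarrow> bool"
  assumes mo: "monomial_order lt"
begin

lemma mo_all: "(\<forall>a. \<not> lt a a) \<and>
     (\<forall>a b c. lt a b \<longrightarrow> lt b c \<longrightarrow> lt a c) \<and>
     (\<forall>a b. a \<noteq> b \<longrightarrow> lt a b \<or> lt b a) \<and>
     wfP lt \<and>
     (\<forall>a b c. lt a b \<longrightarrow> lt (c @ a) (c @ b) \<and> lt (a @ c) (b @ c))"
  using mo unfolding monomial_order_def .

lemma lt_irrefl: "\<not> lt a a" using mo_all by simp
lemma lt_trans: "lt a b \<Longrightarrow> lt b c \<Longrightarrow> lt a c"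
  using mo_all by (elim conjE) (erule allE[of _ a], erule allE[of _ b], erule allE[of _ c], simp)
lemma lt_total: "a \<noteq> b \<Longrightarrow> lt a b \<or> lt b a"
  using mo_all by (elim conjE) (erule allE[of _ a], erule allE[of _ b], simp)
lemma lt_wf: "wfP lt" using mo_all by simp
lemma lt_both: "lt a b \<Longrightarrow> lt (c @ a) (c @ b) \<and> lt (a @ c) (b @ c)"
  using mo_all by (elim conjE) (erule allE[of _ a], erule allE[of _ b], erule allE[of _ c], simp)
lemma lt_left: "lt a b \<Longrightarrow> lt (c @ a) (c @ b)" using lt_both by simp
lemma lt_right: "lt a b \<Longrightarrow> lt (a @ c) (b @ c)" using lt_both by simp
lemma lt_asym: "lt a b \<Longrightarrow> \<not> lt b a" using lt_trans[of a b a] lt_irrefl[of a] by blast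

lemma nil_le: "\<not> lt c []"
proof
  assume c: "lt c []"
  define f where "f n = concat (replicate n c)" for n
  have "lt (f (Suc n)) (f n)" for n
  proof -
    have "lt (f n @ c) (f n @ [])" by (rule lt_left[OF c])
    moreover have "f (Suc n) = f n @ c" by (simp add: f_def replicate_append_same[symmetric])
    ultimately show ?thesis by simp
  qed
  then have "\<forall>i. (f (Suc i), f i) \<in> {(x, y). lt x y}" by simp
  moreover have "wf {(x, y). lt x y}" using lt_wf by (simp add: wfp_def)
  ultimately show False using wf_iff_no_infinite_down_chain[of "{(x, y). lt x y}"] by auto
qed

lemma lt_ctx: "lt a b \<Longrightarrow> lt (c @ a @ d) (c @ b @ d)"
  using lt_left lt_right by blast

lemma le_ctx: "a = b \<or> lt a b \<Longrightarrow> c @ a @ d = c @ b @ d \<or> lt (c @ a @ d) (c @ b @ d)"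
  using lt_ctx by blast

lemma dvd_le: "word_dvd t s \<Longrightarrow> t = s \<or> lt t s"
proof -
  assume "word_dvd t s"
  then obtain c d where s: "s = c @ t @ d" by (auto simp: word_dvd_def)
  have 1: "c = [] \<or> lt [] c" using nil_le lt_total by blast
  have 2: "d = [] \<or> lt [] d" using nil_le lt_total by blast
  have a: "t = c @ t \<or> lt t (c @ t)"
  proof (cases "c = []")
    case False
    then have "lt ([] @ t) (c @ t)" using 1 lt_right by blast
    then show ?thesis by simp
  qed simp
  have b: "c @ t = s \<or> lt (c @ t) s"
  proof (cases "d = []")
    case True then show ?thesis using s by simp
  next
    case False
    then have "lt ((c @ t) @ []) ((c @ t) @ d)" using 2 lt_left by blast
    then show ?thesis using s by simp
  qed
  from a b show ?thesis
  proof (elim disjE)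
    assume "lt t (c @ t)" "lt (c @ t) s"
    then show ?thesis using lt_trans by blast
  qed auto
qed

lemma max_exists: "finite A \<Longrightarrow> A \<noteq> {} \<Longrightarrow> \<exists>t\<in>A. \<forall>s\<in>A. s \<noteq> t \<longrightarrow> lt s t"
proof (induction A rule: finite_ne_induct)
  case (singleton x) then show ?case by auto
next
  case (insert x F)
  then obtain t where t: "t \<in> F" "\<forall>s\<in>F. s \<noteq> t \<longrightarrow> lt s t" by blast
  show ?case
  proof (cases "lt x t")
    case True then show ?thesis using t by auto
  next
    case False
    then have "x = t \<or> lt t x" using lt_total by blast
    then show ?thesis
    proof
      assume "x = t" then show ?thesis using t by auto
    next
      assume xt: "lt t x"
      have "\<forall>s\<in>insert x F. s \<noteq> x \<longrightarrow> lt s x"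
      proof (intro ballI impI)
        fix s assume "s \<in> insert x F" "s \<noteq> x"
        then have "s \<in> F" by simp
        then have "s = t \<or> lt s t" using t by blast
        then show "lt s x" using xt lt_trans[of s t x] by auto
      qed
      then show ?thesis by (intro bexI[of _ x]) auto
    qed
  qed
qed

lemma lm_eq:
  assumes "t \<in> supp p" "\<forall>s\<in>supp p. s \<noteq> t \<longrightarrow> lt s t"
  shows "lm lt p = t"
  unfolding lm_def
proof (rule the_equality)
  show "t \<in> supp p \<and> (\<forall>s\<in>supp p. s \<noteq> t \<longrightarrow> lt s t)" using assms by blast
next
  fix u assume u: "u \<in> supp p \<and> (\<forall>s\<in>supp p. s \<noteq> u \<longrightarrow> lt s u)"
  show "u = t"
  proof (rule ccontr)
    assume "u \<noteq> t"
    then have "lt u t" "lt t u" using u assms by auto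
    then show False using lt_asym by blast
  qed
qed

lemma lm_prop:
  assumes "finite (supp p)" "p \<noteq> pzero"
  shows "lm lt p \<in> supp p" "\<And>s. s \<in> supp p \<Longrightarrow> s \<noteq> lm lt p \<Longrightarrow> lt s (lm lt p)"
proof -
  obtain t where t: "t \<in> supp p" "\<forall>s\<in>supp p. s \<noteq> t \<longrightarrow> lt s t"
    using max_exists[of "supp p"] assms by (auto simp: pzero_iff)
  then have "lm lt p = t" by (rule lm_eq)
  then show "lm lt p \<in> supp p" "\<And>s. s \<in> supp p \<Longrightarrow> s \<noteq> lm lt p \<Longrightarrow> lt s (lm lt p)"
    using t by auto
qed

end



lemma wstar_wstar[simp]: "wstar (wstar w) = w"
  by (simp add: wstar_def rev_map star_letter_def comp_def)

lemma wstar_append: "wstar (u @ v) = wstar v @ wstar u"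
  by (simp add: wstar_def)

lemma wstar_inj: "wstar u = wstar v \<longleftrightarrow> u = v"
  by (metis wstar_wstar)

lemma set_wstar: "l \<in> set (wstar w) \<longleftrightarrow> star_letter l \<in> set w"
  by (auto simp: wstar_def star_letter_def image_iff intro!: bexI[where x="(fst l, \<not> snd l)"])

lemma append_wstar_iff: "u @ v = wstar w \<longleftrightarrow> wstar v @ wstar u = w"
  by (metis wstar_append wstar_wstar)

definition pureW :: "bool \<Rightarrow> 'v word \<Rightarrow> bool" where
  "pureW b w \<longleftrightarrow> (\<forall>l\<in>set w. snd l = b)"

definition pure :: "bool \<Rightarrow> ('v word \<Rightarrow> 'a::zero) \<Rightarrow> bool" where
  "pure b p \<longleftrightarrow> (\<forall>w\<in>supp p. pureW b w)"

lemma analytic_pure: "analytic_poly p \<longleftrightarrow> pure False p"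
  by (simp add: analytic_poly_def pure_def pureW_def)

lemma pureW_wstar: "pureW b (wstar w) \<longleftrightarrow> pureW (\<not> b) w"
proof
  assume a: "pureW b (wstar w)"
  show "pureW (\<not> b) w" unfolding pureW_def
  proof
    fix l assume "l \<in> set w"
    then have "star_letter l \<in> set (wstar w)" by (simp add: set_wstar star_letter_def)
    then show "snd l = (\<not> b)" using a by (auto simp: pureW_def star_letter_def)
  qed
next
  assume a: "pureW (\<not> b) w"
  show "pureW b (wstar w)" unfolding pureW_def
  proof
    fix l assume "l \<in> set (wstar w)"
    then have "star_letter l \<in> set w" by (simp add: set_wstar)
    then show "snd l = b" using a by (auto simp: pureW_def star_letter_def)
  qed
qed

locale gset =
  fixes lt :: "'v word \<Rightarrow> 'v word \<Rightarrow> bool"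
    and cj :: "'a::field \<Rightarrow> 'a"
    and S :: "('v word \<Rightarrow> 'a) set"
  assumes mo: "monomial_order lt"
    and cj_add: "\<And>a b. cj (a + b) = cj a + cj b"
    and cj_mult: "\<And>a b. cj (a * b) = cj a * cj b"
    and cj_cj: "\<And>a. cj (cj a) = a"
    and S_ok: "\<And>p. p \<in> S \<Longrightarrow> p \<in> polys \<and> analytic_poly p"
begin

definition I where "I = star_ideal_generated cj S"

lemma cj_zero: "cj 0 = 0"
proof -
  have "cj 0 = cj 0 + cj 0" using cj_add[of 0 0] by simp
  then show ?thesis by (metis add_cancel_right_right)
qed

lemma cj_eq0: "cj x = 0 \<longleftrightarrow> x = 0"
  using cj_zero cj_cj by metis

lemma cj_sum: "cj (sum f A) = (\<Sum>x\<in>A. cj (f x))"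
  by (induction A rule: infinite_finite_induct) (auto simp: cj_zero cj_add)

lemma supp_pstar: "supp (pstar cj p) = wstar ` supp p"
proof (rule set_eqI)
  fix w
  show "w \<in> supp (pstar cj p) \<longleftrightarrow> w \<in> wstar ` supp p"
    by (auto simp: supp_iff pstar_def cj_eq0 image_iff intro!: bexI[where x="wstar w"])
qed

lemma pstar_pstar[simp]: "pstar cj (pstar cj p) = p"
  by (simp add: pstar_def cj_cj)

lemma pstar_polys: "p \<in> polys \<Longrightarrow> pstar cj p \<in> polys"
  by (simp add: polys_def supp_pstar)

lemma pstar_padd: "pstar cj (padd p q) = padd (pstar cj p) (pstar cj q)"
  by (simp add: pstar_def padd_def cj_add)

lemma pstar_pzero[simp]: "pstar cj pzero = pzero"
  by (simp add: pstar_def pzero_def cj_zero)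

lemma pure_pstar: "pure b p \<Longrightarrow> pure (\<not> b) (pstar cj p)"
  by (auto simp: pure_def supp_pstar pureW_wstar)

lemma pstar_pmult: "pstar cj (pmult f g) = pmult (pstar cj g) (pstar cj f)"
proof (rule ext)
  fix w
  have "pstar cj (pmult f g) w = (\<Sum>(u, v)\<in>{(u, v). u @ v = wstar w}. cj (f u) * cj (g v))"
    by (simp add: pstar_def pmult_def cj_sum case_prod_beta cj_mult)
  also have "\<dots> = (\<Sum>(a, b)\<in>{(a, b). a @ b = w}. cj (g (wstar a)) * cj (f (wstar b)))"
    by (rule sum.reindex_bij_witness[where i="\<lambda>(a, b). (wstar b, wstar a)" and j="\<lambda>(u, v). (wstar v, wstar u)"])
       (auto simp: append_wstar_iff mult.commute)
  also have "\<dots> = pmult (pstar cj g) (pstar cj f) w"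
    by (simp add: pmult_def pstar_def case_prod_beta)
  finally show "pstar cj (pmult f g) w = pmult (pstar cj g) (pstar cj f) w" .
qed

lemma polys_star_ideal: "is_star_ideal cj (polys :: ('v word \<Rightarrow> 'a) set)"
  unfolding is_star_ideal_def is_ideal_def
proof (intro conjI ballI subsetI)
  show "pzero \<in> polys" by (simp add: polys_def)
  fix p q :: "'v word \<Rightarrow> 'a" assume "p \<in> polys" "q \<in> polys"
  then show "padd p q \<in> polys" by (simp add: polys_def finite_padd)
next
  fix p a b :: "'v word \<Rightarrow> 'a" assume "p \<in> polys" "a \<in> polys" "b \<in> polys"
  then show "pmult (pmult a p) b \<in> polys" by (simp add: polys_def finite_pmult)
next
  fix x :: "'v word \<Rightarrow> 'a" assume "x \<in> pstar cj ` polys"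
  then show "x \<in> polys" using pstar_polys by auto
qed simp

lemma Inter_star_ideal:
  fixes F :: "('v word \<Rightarrow> 'a) set set"
  assumes ne: "J0 \<in> F" and all: "\<And>J. J \<in> F \<Longrightarrow> is_star_ideal cj J"
  shows "is_star_ideal cj (\<Inter> F)"
proof -
  have h: "J \<subseteq> polys \<and> pzero \<in> J \<and> (\<forall>p\<in>J. \<forall>q\<in>J. padd p q \<in> J) \<and>
      (\<forall>p\<in>J. \<forall>a\<in>polys. \<forall>b\<in>polys. pmult (pmult a p) b \<in> J) \<and> pstar cj ` J \<subseteq> J"
    if "J \<in> F" for J using all[OF that] by (simp add: is_star_ideal_def is_ideal_def)
  have 1: "\<Inter> F \<subseteq> polys" using h[OF ne] ne by blast
  have 2: "pzero \<in> \<Inter> F" using h by blast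
  have 3: "\<forall>p\<in>\<Inter> F. \<forall>q\<in>\<Inter> F. padd p q \<in> \<Inter> F"
  proof (intro ballI InterI)
    fix p q J assume "p \<in> \<Inter> F" "q \<in> \<Inter> F" "J \<in> F"
    then show "padd p q \<in> J" using h[of J] by blast
  qed
  have 4: "\<forall>p\<in>\<Inter> F. \<forall>a\<in>polys. \<forall>b\<in>polys. pmult (pmult a p) b \<in> \<Inter> F"
  proof (intro ballI InterI)
    fix p a b :: "'v word \<Rightarrow> 'a" and J assume "p \<in> \<Inter> F" "a \<in> polys" "b \<in> polys" "J \<in> F"
    then show "pmult (pmult a p) b \<in> J" using h[of J] by blast
  qed
  have 5: "pstar cj ` \<Inter> F \<subseteq> \<Inter> F"
  proof (intro subsetI InterI)
    fix x J assume "x \<in> pstar cj ` \<Inter> F" "J \<in> F"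
    then show "x \<in> J" using h[of J] by blast
  qed
  show ?thesis unfolding is_star_ideal_def is_ideal_def
    using 1 2 3 4 5 by (intro conjI)
qed

lemma I_star_ideal: "is_star_ideal cj I"
proof -
  have "S \<subseteq> polys" using S_ok by blast
  then have ne: "polys \<in> {J. is_star_ideal cj J \<and> S \<subseteq> J}" using polys_star_ideal by simp
  show ?thesis unfolding I_def star_ideal_generated_def
    by (rule Inter_star_ideal[OF ne]) simp
qed

lemma I_ideal: "is_ideal I" using I_star_ideal by (simp add: is_star_ideal_def)
lemma I_pstar: "p \<in> I \<Longrightarrow> pstar cj p \<in> I" using I_star_ideal by (auto simp: is_star_ideal_def)
lemma S_I: "S \<subseteq> I" by (auto simp: I_def star_ideal_generated_def)
lemma I_sub_polys: "I \<subseteq> polys" using I_ideal by (simp add: is_ideal_def)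
lemma I_min: "is_star_ideal cj K \<Longrightarrow> S \<subseteq> K \<Longrightarrow> I \<subseteq> K"
  by (auto simp: I_def star_ideal_generated_def)

end



lemma pureW_append[simp]: "pureW b (u @ v) \<longleftrightarrow> pureW b u \<and> pureW b v"
  by (auto simp: pureW_def)

lemma pureW_dvd: "word_dvd t s \<Longrightarrow> pureW b s \<Longrightarrow> pureW b t"
  by (auto simp: word_dvd_def)

lemma pure_dl: "pureW b w \<Longrightarrow> pure b (dl w :: _ \<Rightarrow> 'a::{zero,one})"
  using supp_dl[of w] by (auto simp: pure_def)

lemma pure_psub: "pure b p \<Longrightarrow> pure b q \<Longrightarrow> pure b (psub p q :: _ \<Rightarrow> 'a::comm_ring_1)"
  using supp_psub[of p q] by (auto simp: pure_def)

lemma pure_smult: "pure b p \<Longrightarrow> pure b (smult c p :: _ \<Rightarrow> 'a::comm_ring_1)"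
  using supp_smult[of c p] by (auto simp: pure_def)

lemma pure_lc: "(\<And>u. u \<in> supp f \<Longrightarrow> pure b (\<Psi> u)) \<Longrightarrow> pure b (lc f \<Psi>)"
  using supp_lc[of f \<Psi>] by (auto simp: pure_def)

lemma pure_pzero[simp]: "pure b pzero" by (simp add: pure_def)

lemma psub_self: "psub p p = (pzero :: _ \<Rightarrow> 'a::comm_ring_1)"
  by (simp add: psub_def pzero_def)

lemma lc_psub: "psub (lc f \<Psi>) (lc f \<Phi>) = lc f (\<lambda>u. psub (\<Psi> u) (\<Phi> u))"
  by (simp add: psub_def lc_def sum_subtractf right_diff_distrib)

lemma lc_psub_left:
  assumes "finite (supp f)" "finite (supp g)"
  shows "lc (psub f g) \<Psi> = psub (lc f \<Psi>) (lc g \<Psi>)"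
proof -
  have s: "supp (psub f g) \<subseteq> supp f \<union> supp g" by (rule supp_psub)
  show ?thesis
    apply (rule ext)
    apply (subst lc_superset[of "supp f \<union> supp g"], use assms s in auto)
    apply (simp add: psub_def)
    apply (subst (1 2) lc_superset[of "supp f \<union> supp g"], use assms in auto)
    by (simp add: sum_subtractf left_diff_distrib)
qed

context gset
begin

lemmas lt_trans' = lt_trans[OF mo]
lemmas lt_irrefl' = lt_irrefl[OF mo]
lemmas lt_asym' = lt_asym[OF mo]
lemmas lt_total' = lt_total[OF mo]
lemmas lt_wf' = lt_wf[OF mo]
lemmas lt_left' = lt_left[OF mo]
lemmas lt_right' = lt_right[OF mo]
lemmas lt_ctx' = lt_ctx[OF mo]
lemmas nil_le' = nil_le[OF mo]
lemmas dvd_le' = dvd_le[OF mo]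
lemmas lm_prop' = lm_prop[OF mo]
lemmas lm_eq' = lm_eq[OF mo]

lemmas Ipolys = I_polys[OF I_ideal]
lemmas Ipzero = I_pzero[OF I_ideal]
lemmas Ipadd = I_padd[OF I_ideal]
lemmas Imult = I_mult[OF I_ideal]
lemmas Ismult = I_smult[OF I_ideal]
lemmas Ipsub = I_psub[OF I_ideal]
lemmas Ishift = I_shift[OF I_ideal]
lemmas Ilc = I_lc[OF I_ideal]

definition stdw :: "'v word \<Rightarrow> bool" where
  "stdw w \<longleftrightarrow> (\<forall>p\<in>I. p \<noteq> pzero \<longrightarrow> (\<exists>b. pure b p) \<longrightarrow> \<not> word_dvd (lm lt p) w)"

lemma stdw_dvd: "word_dvd t s \<Longrightarrow> stdw s \<Longrightarrow> stdw t"
  unfolding stdw_def using word_dvd_trans by blast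

lemma lm_nil_pure:
  assumes "finite (supp p)" "p \<noteq> pzero" "lm lt p = []"
  shows "pure b p"
proof -
  have "supp p \<subseteq> {[]}"
  proof
    fix s assume "s \<in> supp p"
    then show "s \<in> {[]}" using lm_prop'(2)[OF assms(1,2), of s] assms(3) nil_le'[of s] by auto
  qed
  then show ?thesis by (auto simp: pure_def pureW_def)
qed

lemma lm_pureW:
  assumes "finite (supp p)" "p \<noteq> pzero" "pure b p"
  shows "pureW b (lm lt p)"
  using lm_prop'(1)[OF assms(1,2)] assms(3) by (auto simp: pure_def)

lemma reducer:
  assumes "pureW b s" "\<not> stdw s"
  shows "\<exists>p\<in>I. p \<noteq> pzero \<and> pure b p \<and> word_dvd (lm lt p) s"
proof -
  obtain p b' where p: "p \<in> I" "p \<noteq> pzero" "pure b' p" "word_dvd (lm lt p) s"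
    using assms(2) unfolding stdw_def by blast
  have fp: "finite (supp p)" using Ipolys p(1) .
  have "pure b p"
  proof (cases "lm lt p")
    case Nil
    then show ?thesis using lm_nil_pure[OF fp p(2)] by simp
  next
    case (Cons x xs)
    have "pureW b' (lm lt p)" using lm_pureW[OF fp p(2,3)] .
    then have 1: "snd x = b'" using Cons by (simp add: pureW_def)
    have "pureW b (lm lt p)" using pureW_dvd[OF p(4) assms(1)] .
    then have "snd x = b" using Cons by (simp add: pureW_def)
    then show ?thesis using 1 p(3) by simp
  qed
  then show ?thesis using p by blast
qed

definition nfspec :: "bool \<Rightarrow> 'v word \<Rightarrow> ('v word \<Rightarrow> 'a) \<Rightarrow> bool" where
  "nfspec b s r \<longleftrightarrow> finite (supp r) \<and> pure b r \<and> (\<forall>z\<in>supp r. stdw z \<and> (z = s \<or> lt z s))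
     \<and> psub (dl s) r \<in> I"

lemma nf_exists: "pureW b s \<Longrightarrow> \<exists>r. nfspec b s r"
proof (induction s rule: wfp_induct_rule[OF lt_wf'])
  case (1 s)
  show ?case
  proof (cases "stdw s")
    case True
    have "nfspec b s (dl s)"
      unfolding nfspec_def using True supp_dl[of s] pure_dl[OF "1.prems"]
      by (auto simp: psub_self Ipzero)
    then show ?thesis by blast
  next
    case False
    obtain p where p: "p \<in> I" "p \<noteq> pzero" "pure b p" "word_dvd (lm lt p) s"
      using reducer[OF "1.prems" False] by blast
    define t where "t = lm lt p"
    obtain c d where s: "s = c @ t @ d" using p(4) by (auto simp: word_dvd_def t_def)
    have fp: "finite (supp p)" using Ipolys p(1) .
    have tp: "t \<in> supp p" and tmax: "\<And>u. u \<in> supp p \<Longrightarrow> u \<noteq> t \<Longrightarrow> lt u t"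
      using lm_prop'[OF fp p(2)] by (auto simp: t_def)
    define a where "a = p t"
    have a0: "a \<noteq> 0" using tp by (simp add: a_def supp_iff)
    define sh where "sh = lc p (\<lambda>u. dl (c @ u @ d))"
    have shI: "sh \<in> I" unfolding sh_def by (rule Ishift[OF p(1)])
    have fsh: "finite (supp sh)" using Ipolys shI .
    define q where "q = psub (dl s) (smult (inverse a) sh)"
    have fq: "finite (supp q)" unfolding q_def by (intro finite_psub finite_smult fsh) simp
    have sh_s: "sh s = a"
    proof -
      have "sh s = (\<Sum>u\<in>supp p. p u * (if u = t then 1 else 0))"
        unfolding sh_def lc_def dl_def s by (intro sum.cong) auto
      also have "\<dots> = (\<Sum>u\<in>supp p. if u = t then p u else 0)" by (rule sum.cong) auto
      also have "\<dots> = a" using tp fp by (simp add: a_def)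
      finally show ?thesis .
    qed
    have pcd: "pureW b c" "pureW b d" using "1.prems" s by auto
    have supp_sh: "supp sh \<subseteq> (\<lambda>u. c @ u @ d) ` supp p"
      using supp_lc[of p "\<lambda>u. dl (c @ u @ d)"] supp_dl unfolding sh_def by fastforce
    have qz: "lt z s \<and> pureW b z" if z: "z \<in> supp q" for z
    proof -
      have "z \<noteq> s" using z a0 sh_s by (auto simp: q_def supp_iff psub_def smult_def dl_def)
      moreover have "z \<in> supp (dl s :: _ \<Rightarrow> 'a) \<union> supp (smult (inverse a) sh)"
        using z supp_psub[of "dl s" "smult (inverse a) sh"] unfolding q_def by blast
      ultimately have "z \<in> supp sh" using supp_dl[of s, where 'a='a] supp_smult[of "inverse a" sh] by blast
      then obtain u where u: "u \<in> supp p" "z = c @ u @ d" using supp_sh by blast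
      then have "u \<noteq> t" using \<open>z \<noteq> s\<close> s by auto
      then have "lt z s" using tmax[OF u(1)] lt_ctx' u(2) s by blast
      moreover have "pureW b u" using p(3) u(1) by (simp add: pure_def)
      ultimately show ?thesis using pcd u(2) by simp
    qed
    define R where "R z = (SOME r. nfspec b z r)" for z
    have R: "nfspec b z (R z)" if "z \<in> supp q" for z
    proof -
      have "\<exists>r. nfspec b z r" using "1.IH"[of z] qz[OF that] by blast
      then show ?thesis unfolding R_def by (rule someI_ex)
    qed
    define r where "r = lc q R"
    have "nfspec b s r"
      unfolding nfspec_def
    proof (intro conjI ballI)
      show "finite (supp r)" unfolding r_def using R fq by (intro finite_lc) (auto simp: nfspec_def)
      show "pure b r" unfolding r_def using R by (intro pure_lc) (auto simp: nfspec_def)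
      fix z' assume "z' \<in> supp r"
      then obtain z where z: "z \<in> supp q" "z' \<in> supp (R z)"
        using supp_lc[of q R] unfolding r_def by blast
      have "stdw z' \<and> (z' = z \<or> lt z' z)" using R[OF z(1)] z(2) by (auto simp: nfspec_def)
      then show "stdw z'" "z' = s \<or> lt z' s" using qz[OF z(1)] lt_trans' by blast+
    next
      have 1: "psub (dl s) q \<in> I"
      proof -
        have "psub (dl s) q = smult (inverse a) sh"
          by (simp add: q_def psub_def smult_def)
        then show ?thesis using Ismult[OF shI] by simp
      qed
      have 2: "psub q r \<in> I"
      proof -
        have "psub q r = lc q (\<lambda>z. psub (dl z) (R z))"
          unfolding r_def using lc_self[OF fq] lc_psub[of q dl R] by simp
        also have "\<dots> \<in> I" using fq R by (intro Ilc) (auto simp: nfspec_def)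
        finally show ?thesis .
      qed
      have "psub (dl s) r = padd (psub (dl s) q) (psub q r)"
        by (simp add: psub_def padd_def)
      then show "psub (dl s) r \<in> I" using Ipadd[OF 1 2] by simp
    qed
    then show ?thesis by blast
  qed
qed

end



context gset
begin

definition NFw :: "bool \<Rightarrow> 'v word \<Rightarrow> 'v word \<Rightarrow> 'a" where
  "NFw b s = (SOME r. nfspec b s r)"

lemma NFw_spec: "pureW b s \<Longrightarrow> nfspec b s (NFw b s)"
proof -
  assume "pureW b s"
  then obtain r where "nfspec b s r" using nf_exists by blast
  then show ?thesis unfolding NFw_def by (rule someI[of "nfspec b s"])
qed

lemma NFw_finite: "pureW b s \<Longrightarrow> finite (supp (NFw b s))"
  using NFw_spec by (simp add: nfspec_def)

definition NFp :: "bool \<Rightarrow> ('v word \<Rightarrow> 'a) \<Rightarrow> 'v word \<Rightarrow> 'a" where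
  "NFp b q = lc q (NFw b)"

lemma NF_unique:
  assumes "finite (supp r1)" "finite (supp r2)" "pure b r1" "pure b r2"
    "\<forall>z\<in>supp r1. stdw z" "\<forall>z\<in>supp r2. stdw z" "psub r1 r2 \<in> I"
  shows "r1 = r2"
proof (rule ccontr)
  assume ne: "r1 \<noteq> r2"
  define e where "e = psub r1 r2"
  have e0: "e \<noteq> pzero" using ne by (auto simp: e_def psub_def pzero_def fun_eq_iff)
  have fe: "finite (supp e)" unfolding e_def using assms by (intro finite_psub)
  have "lm lt e \<in> supp e" using lm_prop'(1)[OF fe e0] .
  then have "lm lt e \<in> supp r1 \<union> supp r2" using supp_psub[of r1 r2] by (auto simp: e_def)
  then have "stdw (lm lt e)" using assms by blast
  moreover have "pure b e" unfolding e_def using assms by (intro pure_psub)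
  ultimately show False using assms(7) e0 by (auto simp: stdw_def e_def)
qed

lemma NFp_char:
  assumes "finite (supp q)" "pure b q"
  shows "finite (supp (NFp b q))" "pure b (NFp b q)" "\<forall>z\<in>supp (NFp b q). stdw z"
    "psub q (NFp b q) \<in> I"
proof -
  have sp: "nfspec b u (NFw b u)" if "u \<in> supp q" for u
    using NFw_spec assms(2) that by (auto simp: pure_def)
  show "finite (supp (NFp b q))" unfolding NFp_def
    using sp assms(1) by (intro finite_lc) (auto simp: nfspec_def)
  show "pure b (NFp b q)" unfolding NFp_def
    using sp by (intro pure_lc) (auto simp: nfspec_def)
  show "\<forall>z\<in>supp (NFp b q). stdw z"
    using supp_lc[of q "NFw b"] sp unfolding NFp_def by (fastforce simp: nfspec_def)
  have "psub q (NFp b q) = lc q (\<lambda>u. psub (dl u) (NFw b u))"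
    unfolding NFp_def using lc_self[OF assms(1)] lc_psub[of q dl "NFw b"] by simp
  also have "\<dots> \<in> I" using assms(1) sp by (intro Ilc) (auto simp: nfspec_def)
  finally show "psub q (NFp b q) \<in> I" .
qed

lemma NFp_eq:
  assumes "finite (supp q)" "pure b q" "finite (supp r)" "pure b r" "\<forall>z\<in>supp r. stdw z"
    "psub q r \<in> I"
  shows "NFp b q = r"
proof (rule NF_unique[where b=b])
  have "psub (NFp b q) r = psub (psub q r) (psub q (NFp b q))"
    by (simp add: psub_def)
  then show "psub (NFp b q) r \<in> I" using Ipsub[OF assms(6) NFp_char(4)[OF assms(1,2)]] by simp
qed (use assms NFp_char[OF assms(1,2)] in auto)

lemma NFp_dl: "NFp b (dl s) = NFw b s"
  by (simp add: NFp_def lc_dl)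

lemma NFp_self: "finite (supp r) \<Longrightarrow> pure b r \<Longrightarrow> \<forall>z\<in>supp r. stdw z \<Longrightarrow> NFp b r = r"
  by (rule NFp_eq) (auto simp: psub_self Ipzero)

lemma NFw_std: "pureW b s \<Longrightarrow> stdw s \<Longrightarrow> NFw b s = dl s"
  using NFp_self[of "dl s" b] supp_dl[of s] pure_dl[of b s] by (auto simp: NFp_dl)

lemma NFp_I: "q \<in> I \<Longrightarrow> pure b q \<Longrightarrow> NFp b q = pzero"
proof (rule NFp_eq)
  assume "q \<in> I" "pure b q"
  then show "finite (supp q)" "psub q pzero \<in> I" using Ipolys by (auto simp: psub_def pzero_def)
qed auto

end



definition sufb :: "bool \<Rightarrow> 'v word \<Rightarrow> 'v word" where
  "sufb b w = rev (takeWhile (\<lambda>l. snd l = b) (rev w))"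

definition preb :: "bool \<Rightarrow> 'v word \<Rightarrow> 'v word" where
  "preb b w = rev (dropWhile (\<lambda>l. snd l = b) (rev w))"

lemma preb_sufb: "preb b w @ sufb b w = w"
  unfolding preb_def sufb_def by (metis rev_append rev_rev_ident takeWhile_dropWhile_id)

lemma sufb_pure: "pureW b (sufb b w)"
  by (auto simp: sufb_def pureW_def dest: set_takeWhileD)

lemma preb_end: "preb b w = [] \<or> snd (last (preb b w)) \<noteq> b"
proof (cases "dropWhile (\<lambda>l. snd l = b) (rev w) = []")
  case True then show ?thesis by (simp add: preb_def)
next
  case False
  then have "\<not> snd (hd (dropWhile (\<lambda>l. snd l = b) (rev w))) = b" by (rule hd_dropWhile)
  then show ?thesis using False by (simp add: preb_def last_rev)
qed

lemma K1:
  assumes "w' = [] \<or> snd (last w') \<noteq> b" "pureW b u"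
  shows "sufb b (w' @ u) = u" "preb b (w' @ u) = w'"
proof -
  have tw: "takeWhile (\<lambda>l. snd l = b) (rev w') = []" and dw: "dropWhile (\<lambda>l. snd l = b) (rev w') = rev w'"
  proof -
    have "takeWhile (\<lambda>l. snd l = b) (rev w') = [] \<and> dropWhile (\<lambda>l. snd l = b) (rev w') = rev w'"
    proof (cases w' rule: rev_cases)
      case Nil then show ?thesis by simp
    next
      case (snoc ys y) then show ?thesis using assms(1) by simp
    qed
    then show "takeWhile (\<lambda>l. snd l = b) (rev w') = []" "dropWhile (\<lambda>l. snd l = b) (rev w') = rev w'"
      by auto
  qed
  have allu: "\<And>x. x \<in> set (rev u) \<Longrightarrow> snd x = b" using assms(2) by (simp add: pureW_def)
  have "takeWhile (\<lambda>l. snd l = b) (rev u @ rev w') = rev u @ takeWhile (\<lambda>l. snd l = b) (rev w')"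
    by (rule takeWhile_append2) (rule allu)
  then show "sufb b (w' @ u) = u" unfolding sufb_def using tw by simp
  have "dropWhile (\<lambda>l. snd l = b) (rev u @ rev w') = dropWhile (\<lambda>l. snd l = b) (rev w')"
    by (rule dropWhile_append2) (rule allu)
  then show "preb b (w' @ u) = w'" unfolding preb_def using dw by simp
qed

lemma list_split:
  assumes "pureW b' t" "pureW b y" "x = [] \<or> snd (last x) \<noteq> b" "x @ y = c @ t @ d"
  shows "word_dvd t x \<or> word_dvd t y"
proof -
  from assms(4) obtain us where
    "(x = c @ us \<and> us @ y = t @ d) \<or> (x @ us = c \<and> y = us @ t @ d)"
    by (auto simp: append_eq_append_conv2)
  then show ?thesis
  proof
    assume "x @ us = c \<and> y = us @ t @ d"
    then show ?thesis by (auto simp: word_dvd_def)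
  next
    assume h: "x = c @ us \<and> us @ y = t @ d"
    then obtain vs where "(us = t @ vs \<and> vs @ y = d) \<or> (us @ vs = t \<and> y = vs @ d)"
      by (auto simp: append_eq_append_conv2)
    then show ?thesis
    proof
      assume "us = t @ vs \<and> vs @ y = d"
      then show ?thesis using h by (auto simp: word_dvd_def)
    next
      assume h2: "us @ vs = t \<and> y = vs @ d"
      show ?thesis
      proof (cases "us = []")
        case True
        then have "y = [] @ t @ d" using h2 by simp
        then show ?thesis unfolding word_dvd_def by blast
      next
        case usne: False
        show ?thesis
        proof (cases "vs = []")
          case True
          then have "x = c @ t @ []" using h h2 by simp
          then show ?thesis unfolding word_dvd_def by blast
        next
          case vsne: False
          have "x \<noteq> []" using h usne by simp
          then have lx: "snd (last x) \<noteq> b" using assms(3) by simp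
          have "last x = last us" using h usne by simp
          moreover have "last us \<in> set t" using h2 usne by auto
          ultimately have 1: "snd (last x) = b'" using assms(1) by (auto simp: pureW_def)
          have "hd vs \<in> set y" using h2 vsne by simp
          then have 2: "snd (hd vs) = b" using assms(2) by (auto simp: pureW_def)
          have "hd vs \<in> set t" using h2 vsne by auto
          then have "snd (hd vs) = b'" using assms(1) by (auto simp: pureW_def)
          then show ?thesis using 1 2 lx by simp
        qed
      qed
    qed
  qed
qed

context gset
begin

definition emb :: "'v word \<Rightarrow> ('v word \<Rightarrow> 'a) \<Rightarrow> 'v word \<Rightarrow> 'a" where
  "emb w' r = lc r (\<lambda>u. dl (w' @ u))"

definition step :: "'v word \<Rightarrow> 'v \<times> bool \<Rightarrow> 'v word \<Rightarrow> 'a" where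
  "step w l = emb (preb (snd l) w) (NFw (snd l) (sufb (snd l) w @ [l]))"

definition act :: "('v word \<Rightarrow> 'a) \<Rightarrow> 'v \<times> bool \<Rightarrow> 'v word \<Rightarrow> 'a" where
  "act v l = lc v (\<lambda>w. step w l)"

definition actw :: "('v word \<Rightarrow> 'a) \<Rightarrow> 'v word \<Rightarrow> 'v word \<Rightarrow> 'a" where
  "actw v u = foldl act v u"

definition actp :: "('v word \<Rightarrow> 'a) \<Rightarrow> ('v word \<Rightarrow> 'a) \<Rightarrow> 'v word \<Rightarrow> 'a" where
  "actp v f = lc f (actw v)"

lemma actw_Nil[simp]: "actw v [] = v" by (simp add: actw_def)
lemma actw_snoc[simp]: "actw v (u @ [l]) = act (actw v u) l" by (simp add: actw_def)
lemma actw_append: "actw (actw v u) w = actw v (u @ w)" by (simp add: actw_def)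

lemma finite_emb: "finite (supp r) \<Longrightarrow> finite (supp (emb w' r))"
  unfolding emb_def by (intro finite_lc) auto

lemma finite_step: "finite (supp (step w l))"
  unfolding step_def
  by (intro finite_emb NFw_finite) (use sufb_pure[of "snd l" w] in \<open>simp add: pureW_def\<close>)

lemma finite_act: "finite (supp v) \<Longrightarrow> finite (supp (act v l))"
  unfolding act_def by (intro finite_lc finite_step)

lemma finite_actw: "finite (supp v) \<Longrightarrow> finite (supp (actw v u))"
  by (induction u rule: rev_induct) (auto intro: finite_act)

lemma finite_actp: "finite (supp f) \<Longrightarrow> finite (supp v) \<Longrightarrow> finite (supp (actp v f))"
  unfolding actp_def by (intro finite_lc finite_actw)

lemma actw_lin:
  assumes "finite (supp g)" "\<And>z. z \<in> supp g \<Longrightarrow> finite (supp (\<Psi> z))"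
  shows "actw (lc g \<Psi>) u = lc g (\<lambda>z. actw (\<Psi> z) u)"
proof (induction u rule: rev_induct)
  case Nil then show ?case by simp
next
  case (snoc l u)
  have "actw (lc g \<Psi>) (u @ [l]) = lc (lc g (\<lambda>z. actw (\<Psi> z) u)) (\<lambda>w. step w l)"
    by (simp add: snoc act_def)
  also have "\<dots> = lc g (\<lambda>z. act (actw (\<Psi> z) u) l)"
    unfolding act_def using assms by (intro lc_lc finite_actw) auto
  finally show ?case by simp
qed

lemma actp_lin:
  assumes "finite (supp g)" "\<And>z. z \<in> supp g \<Longrightarrow> finite (supp (\<Psi> z))"
  shows "actp (lc g \<Psi>) f = lc g (\<lambda>z. actp (\<Psi> z) f)"
proof -
  have "actw (lc g \<Psi>) = (\<lambda>u. lc g (\<lambda>z. actw (\<Psi> z) u))"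
    by (rule ext, rule actw_lin) (use assms in auto)
  then show ?thesis unfolding actp_def by (simp add: lc_swap[of f g])
qed

lemma actp_pmult:
  assumes "finite (supp v)" "finite (supp f)" "finite (supp g)"
  shows "actp v (pmult f g) = actp (actp v f) g"
proof -
  have "actp v (pmult f g) = lc (lc f (\<lambda>u. lc g (\<lambda>w. dl (u @ w)))) (actw v)"
    by (simp add: actp_def pmult_lc assms(2,3))
  also have "\<dots> = lc f (\<lambda>u. lc (lc g (\<lambda>w. dl (u @ w))) (actw v))"
    using assms by (intro lc_lc finite_lc) auto
  also have "\<dots> = lc f (\<lambda>u. lc g (\<lambda>w. actw v (u @ w)))"
    using assms by (intro lc_cong) (simp add: lc_lc lc_dl)
  also have "\<dots> = lc g (\<lambda>w. lc f (\<lambda>u. actw (actw v u) w))"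
    by (simp add: lc_swap[of f g] actw_append)
  also have "\<dots> = actp (actp v f) g"
    unfolding actp_def using assms by (intro lc_cong) (simp add: actw_lin finite_actw)
  finally show ?thesis .
qed

lemma actp_padd:
  "finite (supp f) \<Longrightarrow> finite (supp g) \<Longrightarrow> actp v (padd f g) = padd (actp v f) (actp v g)"
  by (simp add: actp_def lc_add)

lemma actw_pzero: "actw pzero u = pzero"
  by (induction u rule: rev_induct) (auto simp: act_def lc_pzero)

lemma actp_pzero_left: "actp pzero f = pzero"
proof -
  have "actw pzero = (\<lambda>u. pzero)" using actw_pzero by (intro ext) simp
  then show ?thesis by (simp add: actp_def lc_to_pzero)
qed

lemma actp_pzero_right: "actp v pzero = pzero"
  by (simp add: actp_def lc_pzero)

end



context gset
begin

lemma pure_pmult_dl: "finite (supp r) \<Longrightarrow> pure b r \<Longrightarrow> pureW b u \<Longrightarrow> pure b (pmult r (dl u))"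
  by (simp add: pmult_dl_right) (intro pure_lc pure_dl, auto simp: pure_def)

lemma finite_pmult_dl: "finite (supp r) \<Longrightarrow> finite (supp (pmult r (dl u)))"
  by (intro finite_pmult) auto

lemma pmult_dl_dl: "finite (supp r) \<Longrightarrow> pmult (pmult r (dl u)) (dl v) = pmult r (dl (u @ v))"
proof -
  assume f: "finite (supp r)"
  have "finite (supp (lc r (\<lambda>z. dl (z @ u))))" using f by (intro finite_lc) auto
  then show ?thesis using f by (simp add: pmult_dl_right lc_lc lc_dl)
qed

lemma Irmul: "p \<in> I \<Longrightarrow> pmult p (dl d) \<in> I"
  using Imult[of p "dl []" "dl d"] pmult_dl_left[of p] Ipolys by simp

lemma K2:
  assumes w': "w' = [] \<or> snd (last w') \<noteq> b" and r: "finite (supp r)" "pure b r" and l: "snd l = b"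
  shows "act (emb w' r) l = emb w' (NFp b (pmult r (dl [l])))"
proof -
  have fN: "finite (supp (NFw b (u @ [l])))" if "u \<in> supp r" for u
    using r(2) that l by (intro NFw_finite) (auto simp: pure_def pureW_def)
  have "act (emb w' r) l = lc r (\<lambda>u. lc (dl (w' @ u)) (\<lambda>z. step z l))"
    unfolding act_def emb_def using r by (intro lc_lc) auto
  also have "\<dots> = lc r (\<lambda>u. emb w' (NFw b (u @ [l])))"
  proof (rule lc_cong)
    fix u assume "u \<in> supp r"
    then have "pureW b u" using r(2) by (simp add: pure_def)
    then show "lc (dl (w' @ u)) (\<lambda>z. step z l) = emb w' (NFw b (u @ [l]))"
      using K1[OF w'] l by (simp add: lc_dl step_def)
  qed
  also have "\<dots> = emb w' (lc r (\<lambda>u. NFw b (u @ [l])))"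
    unfolding emb_def using r fN by (intro lc_lc[symmetric]) auto
  also have "lc r (\<lambda>u. NFw b (u @ [l])) = NFp b (pmult r (dl [l]))"
    unfolding NFp_def using r by (simp add: pmult_dl_right lc_lc lc_dl)
  finally show ?thesis .
qed

lemma K3:
  assumes w': "w' = [] \<or> snd (last w') \<noteq> b" and r: "finite (supp r)" "pure b r" "\<forall>z\<in>supp r. stdw z"
  shows "pureW b u \<Longrightarrow> actw (emb w' r) u = emb w' (NFp b (pmult r (dl u)))"
proof (induction u rule: rev_induct)
  case Nil
  have "pmult r (dl []) = r" using r by (simp add: pmult_dl_right lc_self)
  then show ?case using NFp_self[OF r] by simp
next
  case (snoc l u)
  have pu: "pureW b u" and l: "snd l = b" using snoc.prems by (auto simp: pureW_def)
  define A where "A = pmult r (dl u)"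
  have fA: "finite (supp A)" and pA: "pure b A" unfolding A_def using r pu
    by (auto intro: finite_pmult_dl pure_pmult_dl)
  define q where "q = NFp b A"
  note qc = NFp_char[OF fA pA, folded q_def]
  have fql: "finite (supp (pmult q (dl [l])))" and pql: "pure b (pmult q (dl [l]))"
    using qc l by (auto intro: finite_pmult_dl pure_pmult_dl simp: pureW_def)
  note Nc = NFp_char[OF fql pql]
  have "actw (emb w' r) (u @ [l]) = act (emb w' q) l"
    using snoc.IH[OF pu] by (simp add: q_def A_def)
  also have "\<dots> = emb w' (NFp b (pmult q (dl [l])))"
    by (rule K2[OF w' qc(1,2) l])
  also have "NFp b (pmult q (dl [l])) = NFp b (pmult r (dl (u @ [l])))"
  proof (rule NFp_eq[symmetric])
    show "finite (supp (pmult r (dl (u @ [l]))))" by (rule finite_pmult_dl[OF r(1)])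
    show "pure b (pmult r (dl (u @ [l])))" using r snoc.prems by (intro pure_pmult_dl)
    have e1: "pmult r (dl (u @ [l])) = pmult A (dl [l])" unfolding A_def using r by (simp add: pmult_dl_dl)
    have "psub (pmult A (dl [l])) (pmult q (dl [l])) = pmult (psub A q) (dl [l])"
      using fA qc(1) by (simp add: pmult_dl_right lc_psub_left finite_psub)
    also have "\<dots> \<in> I" using qc(4) by (intro Irmul)
    finally have 1: "psub (pmult A (dl [l])) (pmult q (dl [l])) \<in> I" .
    have "psub (pmult r (dl (u @ [l]))) (NFp b (pmult q (dl [l]))) =
        padd (psub (pmult A (dl [l])) (pmult q (dl [l]))) (psub (pmult q (dl [l])) (NFp b (pmult q (dl [l]))))"
      unfolding e1 by (simp add: psub_def padd_def)
    then show "psub (pmult r (dl (u @ [l]))) (NFp b (pmult q (dl [l]))) \<in> I"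
      using Ipadd[OF 1 Nc(4)] by simp
  qed (use Nc in auto)
  finally show ?case .
qed

lemma dvd_suffix: "word_dvd (sufb b w) w"
  using preb_sufb[of b w] unfolding word_dvd_def by (metis append_Nil2)

lemma dvd_prefix: "word_dvd (preb b w) w"
  using preb_sufb[of b w] unfolding word_dvd_def by (metis append_Nil)

lemma KL:
  assumes w: "stdw w" and p: "p \<in> I" "pure b p"
  shows "actp (dl w) p = pzero"
proof -
  define w' where "w' = preb b w"
  define s where "s = sufb b w"
  have w'e: "w' = [] \<or> snd (last w') \<noteq> b" unfolding w'_def by (rule preb_end)
  have ps: "pureW b s" unfolding s_def by (rule sufb_pure)
  have ss: "stdw s" using stdw_dvd[OF dvd_suffix w] by (simp add: s_def)
  have fp: "finite (supp p)" using Ipolys p(1) .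
  have dw: "dl w = emb w' (dl s)"
    by (simp add: emb_def lc_dl w'_def s_def preb_sufb)
  have r: "finite (supp (dl s :: _ \<Rightarrow> 'a))" "pure b (dl s :: _ \<Rightarrow> 'a)" "\<forall>z\<in>supp (dl s :: _ \<Rightarrow> 'a). stdw z"
    using supp_dl[of s] ss pure_dl[OF ps] by auto
  have fNs: "finite (supp (NFw b (s @ u)))" if "u \<in> supp p" for u
    using that p(2) ps by (intro NFw_finite) (auto simp: pure_def)
  have "actp (dl w) p = lc p (\<lambda>u. emb w' (NFw b (s @ u)))"
    unfolding actp_def dw
  proof (rule lc_cong)
    fix u assume "u \<in> supp p"
    then have "pureW b u" using p(2) by (simp add: pure_def)
    then show "actw (emb w' (dl s)) u = emb w' (NFw b (s @ u))"
      using K3[OF w'e r] by (simp add: pmult_dl_right lc_dl NFp_dl)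
  qed
  also have "\<dots> = emb w' (lc p (\<lambda>u. NFw b (s @ u)))"
    unfolding emb_def using fp fNs by (intro lc_lc[symmetric]) auto
  also have "lc p (\<lambda>u. NFw b (s @ u)) = NFp b (lc p (\<lambda>u. dl (s @ u @ [])))"
    unfolding NFp_def using fp by (simp add: lc_lc lc_dl)
  also have "\<dots> = pzero"
  proof (rule NFp_I)
    show "lc p (\<lambda>u. dl (s @ u @ [])) \<in> I" by (rule Ishift[OF p(1)])
    show "pure b (lc p (\<lambda>u. dl (s @ u @ [])))"
      using p(2) ps by (intro pure_lc pure_dl) (auto simp: pure_def)
  qed
  finally show ?thesis by (simp add: emb_def lc_pzero)
qed

definition stdV :: "('v word \<Rightarrow> 'a) \<Rightarrow> bool" where
  "stdV v \<longleftrightarrow> finite (supp v) \<and> (\<forall>w\<in>supp v. stdw w)"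

lemma KL2:
  assumes "stdV v" "p \<in> I" "pure b p"
  shows "actp v p = pzero"
proof -
  have fv: "finite (supp v)" using assms(1) by (simp add: stdV_def)
  have "actp v p = actp (lc v dl) p" using lc_self[OF fv] by simp
  also have "\<dots> = lc v (\<lambda>z. actp (dl z) p)" using fv by (intro actp_lin) auto
  also have "\<dots> = pzero"
    using assms KL by (intro lc_to_pzero') (auto simp: stdV_def)
  finally show ?thesis .
qed

lemma CAT:
  assumes "stdw x" "stdw y" "pureW b y" "x = [] \<or> snd (last x) \<noteq> b"
  shows "stdw (x @ y)"
  unfolding stdw_def
proof (intro ballI impI notI)
  fix p assume p: "p \<in> I" "p \<noteq> pzero" "\<exists>b. pure b p" and dv: "word_dvd (lm lt p) (x @ y)"
  then obtain b' where pb: "pure b' p" by blast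
  have fp: "finite (supp p)" using Ipolys p(1) .
  have pt: "pureW b' (lm lt p)" using lm_pureW[OF fp p(2) pb] .
  obtain c d where "x @ y = c @ lm lt p @ d" using dv by (auto simp: word_dvd_def)
  then have "word_dvd (lm lt p) x \<or> word_dvd (lm lt p) y"
    using list_split[OF pt assms(3,4)] by blast
  then show False using assms(1,2) p unfolding stdw_def by blast
qed

lemma step_std: "stdw w \<Longrightarrow> z \<in> supp (step w l) \<Longrightarrow> stdw z"
proof -
  assume w: "stdw w" and z: "z \<in> supp (step w l)"
  define b where "b = snd l"
  define N where "N = NFw b (sufb b w @ [l])"
  have pN: "pureW b (sufb b w @ [l])" using sufb_pure[of b w] by (simp add: pureW_def b_def)
  have sp: "nfspec b (sufb b w @ [l]) N" unfolding N_def using NFw_spec[OF pN] .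
  have "z \<in> (\<Union>u\<in>supp N. supp (dl (preb b w @ u) :: _ \<Rightarrow> 'a))"
    using z supp_lc unfolding step_def emb_def b_def[symmetric] N_def[symmetric] by blast
  then obtain u where u: "u \<in> supp N" "z = preb b w @ u" using supp_dl by fastforce
  have "stdw u" "pureW b u" using sp u(1) by (auto simp: nfspec_def pure_def)
  moreover have "stdw (preb b w)" using stdw_dvd[OF dvd_prefix w] .
  ultimately show "stdw z" using CAT preb_end u(2) by blast
qed

lemma act_std: "stdV v \<Longrightarrow> stdV (act v l)"
proof -
  assume v: "stdV v"
  have "finite (supp (act v l))" using v by (intro finite_act) (simp add: stdV_def)
  moreover have "stdw z" if zin: "z \<in> supp (act v l)" for z
  proof -
    obtain w where "w \<in> supp v" "z \<in> supp (step w l)"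
      using zin supp_lc[of v "\<lambda>w. step w l"] unfolding act_def by blast
    then show ?thesis using v step_std[of w z l] unfolding stdV_def by blast
  qed
  ultimately show ?thesis by (simp add: stdV_def)
qed

lemma actw_std: "stdV v \<Longrightarrow> stdV (actw v u)"
  by (induction u rule: rev_induct) (auto intro: act_std)

lemma actp_std: "stdV v \<Longrightarrow> finite (supp f) \<Longrightarrow> stdV (actp v f)"
  unfolding stdV_def actp_def using supp_lc[of f "actw v"] actw_std[unfolded stdV_def]
  by (auto intro!: finite_lc finite_actw)

end



context gset
begin

definition Kset :: "('v word \<Rightarrow> 'a) set" where
  "Kset = {f \<in> polys. \<forall>v. stdV v \<longrightarrow> actp v f = pzero \<and> actp v (pstar cj f) = pzero}"

lemma kill_mult:
  assumes f: "f \<in> polys" "\<And>v. stdV v \<Longrightarrow> actp v f = pzero" and a: "a \<in> polys" and b: "b \<in> polys"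
    and v: "stdV v"
  shows "actp v (pmult (pmult a f) b) = pzero"
proof -
  have fin: "finite (supp f)" "finite (supp a)" "finite (supp b)" "finite (supp v)"
    using f a b v by (auto simp: polys_def stdV_def)
  have "actp v (pmult (pmult a f) b) = actp (actp (actp v a) f) b"
    using fin by (simp add: actp_pmult finite_pmult finite_actp)
  also have "actp (actp v a) f = pzero" using f(2) actp_std[OF v fin(2)] by simp
  finally show ?thesis by (simp add: actp_pzero_left)
qed

lemma kill_mult2:
  assumes f: "f \<in> polys" "\<And>v. stdV v \<Longrightarrow> actp v f = pzero" and a: "a \<in> polys" and b: "b \<in> polys"
    and v: "stdV v"
  shows "actp v (pmult a (pmult f b)) = pzero"
proof -
  have fin: "finite (supp f)" "finite (supp a)" "finite (supp b)" "finite (supp v)"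
    using f a b v by (auto simp: polys_def stdV_def)
  have "actp v (pmult a (pmult f b)) = actp (actp (actp v a) f) b"
    using fin by (simp add: actp_pmult finite_pmult finite_actp)
  also have "actp (actp v a) f = pzero" using f(2) actp_std[OF v fin(2)] by simp
  finally show ?thesis by (simp add: actp_pzero_left)
qed

lemma K_star_ideal: "is_star_ideal cj Kset"
  unfolding is_star_ideal_def is_ideal_def
proof (intro conjI ballI subsetI)
  show "pzero \<in> Kset" by (simp add: Kset_def actp_pzero_right polys_def)
next
  fix x :: "'v word \<Rightarrow> 'a" assume "x \<in> Kset" then show "x \<in> polys" by (simp add: Kset_def)
next
  fix p q :: "'v word \<Rightarrow> 'a" assume p: "p \<in> Kset" and q: "q \<in> Kset"
  have fin: "finite (supp p)" "finite (supp q)" "finite (supp (pstar cj p))" "finite (supp (pstar cj q))"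
    using p q pstar_polys by (auto simp: Kset_def polys_def)
  show "padd p q \<in> Kset"
    using p q fin by (auto simp: Kset_def polys_def finite_padd actp_padd pstar_padd) (simp_all add: padd_def pzero_def)
next
  fix p a b :: "'v word \<Rightarrow> 'a" assume p: "p \<in> Kset" and a: "a \<in> polys" and b: "b \<in> polys"
  have pp: "p \<in> polys" "pstar cj p \<in> polys" using p pstar_polys by (auto simp: Kset_def)
  have "pmult (pmult a p) b \<in> polys"
    using pp a b by (simp add: polys_def finite_pmult)
  moreover have "actp v (pmult (pmult a p) b) = pzero" if "stdV v" for v
    using kill_mult[OF pp(1) _ a b that] p by (auto simp: Kset_def)
  moreover have "actp v (pstar cj (pmult (pmult a p) b)) = pzero" if "stdV v" for v
  proof -
    have "pstar cj (pmult (pmult a p) b) = pmult (pstar cj b) (pmult (pstar cj p) (pstar cj a))"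
      by (simp add: pstar_pmult)
    then show ?thesis
      using kill_mult2[OF pp(2) _ pstar_polys[OF b] pstar_polys[OF a] that] p by (auto simp: Kset_def)
  qed
  ultimately show "pmult (pmult a p) b \<in> Kset" by (simp add: Kset_def)
next
  fix x :: "'v word \<Rightarrow> 'a" assume "x \<in> pstar cj ` Kset"
  then obtain p where "p \<in> Kset" "x = pstar cj p" by blast
  then show "x \<in> Kset" using pstar_polys by (auto simp: Kset_def)
qed

lemma S_K: "S \<subseteq> Kset"
proof
  fix p assume p: "p \<in> S"
  have pI: "p \<in> I" using S_I p by blast
  have pF: "pure False p" using S_ok[OF p] by (simp add: analytic_pure)
  have sI: "pstar cj p \<in> I" using I_pstar[OF pI] .
  have sT: "pure True (pstar cj p)" using pure_pstar[OF pF] by simp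
  show "p \<in> Kset" unfolding Kset_def using S_ok[OF p] KL2[OF _ pI pF] KL2[OF _ sI sT] by auto
qed

lemma I_K: "I \<subseteq> Kset" by (rule I_min[OF K_star_ideal S_K])

lemma PHI1: "stdw w \<Longrightarrow> actw (dl []) w = dl w"
proof (induction w rule: rev_induct)
  case Nil then show ?case by simp
next
  case (snoc l w)
  define b where "b = snd l"
  have "word_dvd w (w @ [l])" unfolding word_dvd_def by (metis append_Nil)
  then have sw: "stdw w" using stdw_dvd snoc.prems by blast
  have "word_dvd (sufb b w @ [l]) (w @ [l])"
    unfolding word_dvd_def using preb_sufb[of b w] by (metis append_assoc append_Nil2)
  then have ss: "stdw (sufb b w @ [l])" using stdw_dvd snoc.prems by blast
  have ps: "pureW b (sufb b w @ [l])" using sufb_pure[of b w] by (simp add: pureW_def b_def)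
  have "actw (dl []) (w @ [l]) = step w l" using snoc.IH[OF sw] by (simp add: act_def lc_dl)
  also have "\<dots> = dl (preb b w @ sufb b w @ [l])"
    unfolding step_def b_def[symmetric] NFw_std[OF ps ss] by (simp add: emb_def lc_dl)
  also have "\<dots> = dl (w @ [l])" using preb_sufb[of b w] by (metis append_assoc)
  finally show ?case .
qed

lemma PHI2: "z \<in> supp (actw (dl []) w) \<Longrightarrow> z = w \<or> lt z w"
proof (induction w arbitrary: z rule: rev_induct)
  case Nil then show ?case using supp_dl[of "[]"] by auto
next
  case (snoc l w)
  define b where "b = snd l"
  from snoc.prems obtain x where x: "x \<in> supp (actw (dl []) w)" "z \<in> supp (step x l)"
    using supp_lc[of "actw (dl []) w" "\<lambda>w. step w l"] by (auto simp: act_def)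
  define N where "N = NFw b (sufb b x @ [l])"
  have ps: "pureW b (sufb b x @ [l])" using sufb_pure[of b x] by (simp add: pureW_def b_def)
  have sp: "nfspec b (sufb b x @ [l]) N" unfolding N_def using NFw_spec[OF ps] .
  have "z \<in> (\<Union>u\<in>supp N. supp (dl (preb b x @ u) :: _ \<Rightarrow> 'a))"
    using x(2) supp_lc unfolding step_def emb_def b_def[symmetric] N_def[symmetric] by blast
  then obtain u where u: "u \<in> supp N" "z = preb b x @ u" using supp_dl by fastforce
  have "u = sufb b x @ [l] \<or> lt u (sufb b x @ [l])" using sp u(1) by (auto simp: nfspec_def)
  then have 1: "z = x @ [l] \<or> lt z (x @ [l])"
    using lt_left'[of u "sufb b x @ [l]" "preb b x"] u(2) preb_sufb[of b x]
    by (metis append_assoc)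
  have "x = w \<or> lt x w" using snoc.IH[OF x(1)] .
  then have 2: "x @ [l] = w @ [l] \<or> lt (x @ [l]) (w @ [l])" using lt_right' by blast
  from 1 2 show ?case using lt_trans' by blast
qed

lemma FINAL:
  assumes f: "f \<in> I" "f \<noteq> pzero"
  shows "\<not> stdw (lm lt f)"
proof
  define t where "t = lm lt f"
  assume st: "stdw (lm lt f)"
  then have st': "stdw t" by (simp add: t_def)
  have ff: "finite (supp f)" using Ipolys f(1) .
  have tf: "t \<in> supp f" and tmax: "\<And>u. u \<in> supp f \<Longrightarrow> u \<noteq> t \<Longrightarrow> lt u t"
    using lm_prop'[OF ff f(2)] by (auto simp: t_def)
  have s0: "stdw []" using stdw_dvd[OF word_dvd_nil st'] .
  have sv: "stdV (dl [] :: _ \<Rightarrow> 'a)" using supp_dl[of "[]"] s0 by (auto simp: stdV_def)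
  have "actp (dl []) f = pzero" using I_K f(1) sv by (auto simp: Kset_def)
  then have "0 = actp (dl []) f t" by (simp add: pzero_def)
  also have "\<dots> = (\<Sum>u\<in>supp f. f u * actw (dl []) u t)" by (simp add: actp_def lc_def)
  also have "\<dots> = f t * actw (dl []) t t + (\<Sum>u\<in>supp f - {t}. f u * actw (dl []) u t)"
    using ff tf by (rule sum.remove)
  also have "(\<Sum>u\<in>supp f - {t}. f u * actw (dl []) u t) = 0"
  proof (rule sum.neutral, rule ballI)
    fix u assume u: "u \<in> supp f - {t}"
    have "actw (dl []) u t = 0"
    proof (rule ccontr)
      assume "actw (dl []) u t \<noteq> 0"
      then have "t = u \<or> lt t u" using PHI2[of t u] by (simp add: supp_iff)
      then show False using tmax[of u] u lt_asym' by auto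
    qed
    then show "f u * actw (dl []) u t = 0" by simp
  qed
  also have "actw (dl []) t t = 1" using PHI1[OF st'] by (simp add: dl_def)
  finally show False using tf by (simp add: supp_iff)
qed

lemma GB_pure:
  assumes GB: "reduced_groebner_basis lt I GB" and g: "g \<in> GB"
  shows "\<exists>b. pure b g"
proof -
  have gI: "g \<in> I" and mon: "monic lt g"
    using GB g by (auto simp: reduced_groebner_basis_def)
  have cover: "\<And>f. f \<in> I \<Longrightarrow> f \<noteq> pzero \<Longrightarrow> \<exists>g'\<in>GB. word_dvd (lm lt g') (lm lt f)"
    using GB by (auto simp: reduced_groebner_basis_def)
  have red: "\<And>g1 g2 w. g1 \<in> GB \<Longrightarrow> g2 \<in> GB \<Longrightarrow> g1 \<noteq> g2 \<Longrightarrow> w \<in> supp g2 \<Longrightarrow> \<not> word_dvd (lm lt g1) w"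
    using GB by (auto simp: reduced_groebner_basis_def)
  define t where "t = lm lt g"
  have g0: "g \<noteq> pzero" and gt: "g t = 1" using mon by (auto simp: monic_def t_def)
  have fg: "finite (supp g)" using Ipolys gI .
  have tg: "t \<in> supp g" and tmax: "\<And>u. u \<in> supp g \<Longrightarrow> u \<noteq> t \<Longrightarrow> lt u t"
    using lm_prop'[OF fg g0] by (auto simp: t_def)
  have istd: "\<not> word_dvd (lm lt f) w" if w: "w \<in> supp g" "w \<noteq> t" and f: "f \<in> I" "f \<noteq> pzero" for w f
  proof
    assume dv: "word_dvd (lm lt f) w"
    obtain g' where g': "g' \<in> GB" "word_dvd (lm lt g') (lm lt f)" using cover[OF f] by blast
    have d2: "word_dvd (lm lt g') w" using word_dvd_trans[OF g'(2) dv] .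
    show False
    proof (cases "g' = g")
      case True
      then have "t = w \<or> lt t w" using dvd_le'[OF d2] by (simp add: t_def)
      then show False using tmax[OF w] w(2) lt_asym' by blast
    next
      case False
      then show False using red[OF g'(1) g False w(1)] d2 by blast
    qed
  qed
  have "\<not> stdw t" using FINAL[OF gI g0] by (simp add: t_def)
  then obtain p b where p: "p \<in> I" "p \<noteq> pzero" "pure b p" "word_dvd (lm lt p) t"
    unfolding stdw_def by blast
  obtain g' where g': "g' \<in> GB" "word_dvd (lm lt g') (lm lt p)" using cover[OF p(1,2)] by blast
  have d2: "word_dvd (lm lt g') t" using word_dvd_trans[OF g'(2) p(4)] .
  have "g' = g" using red[OF g'(1) g _ tg] d2 by blast
  then have "lm lt p = t" using g'(2) p(4) word_dvd_antisym by (simp add: t_def)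
  then have pt: "pureW b t" using lm_pureW[OF Ipolys[OF p(1)] p(2,3)] by simp
  define h where "h = NFw b t"
  have hs: "nfspec b t h" unfolding h_def using NFw_spec[OF pt] .
  have fh: "finite (supp h)" and ph: "pure b h" and sh: "\<forall>z\<in>supp h. stdw z"
    and hI: "psub (dl t) h \<in> I" using hs by (auto simp: nfspec_def)
  have ht: "h t = 0" using sh \<open>\<not> stdw t\<close> by (auto simp: supp_iff)
  define e where "e = psub g (psub (dl t) h)"
  have eI: "e \<in> I" unfolding e_def using Ipsub[OF gI hI] .
  have e0: "e = pzero"
  proof (rule ccontr)
    assume ne: "e \<noteq> pzero"
    have fe: "finite (supp e)" using Ipolys eI .
    define m where "m = lm lt e"
    have me: "m \<in> supp e" using lm_prop'(1)[OF fe ne] by (simp add: m_def)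
    have "m \<noteq> t" using me gt ht by (auto simp: e_def psub_def supp_iff dl_def)
    then have "e m = g m + h m" by (simp add: e_def psub_def dl_def)
    then have "m \<in> supp g \<or> m \<in> supp h" using me by (auto simp: supp_iff)
    then show False
    proof
      assume "m \<in> supp g"
      then show False using istd[OF _ \<open>m \<noteq> t\<close> eI ne] by (simp add: m_def)
    next
      assume "m \<in> supp h"
      then have "stdw m" using sh by blast
      then show False using FINAL[OF eI ne] by (simp add: m_def)
    qed
  qed
  then have "g = psub (dl t) h" by (auto simp: e_def psub_def pzero_def fun_eq_iff)
  moreover have "pure b (psub (dl t) h)" using pure_psub[OF pure_dl[OF pt] ph] .
  ultimately show ?thesis by blast
qed

lemma result:
  assumes GB: "reduced_groebner_basis lt I GB"
  shows "\<exists>G H. G \<subseteq> polys \<and> H \<subseteq> polys \<and> (\<forall>p\<in>G \<union> H. analytic_poly p) \<and>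
              GB = G \<union> pstar cj ` H"
proof -
  have GBp: "GB \<subseteq> polys" using GB I_sub_polys by (auto simp: reduced_groebner_basis_def)
  define G where "G = {g \<in> GB. pure False g}"
  define H where "H = pstar cj ` {g \<in> GB. pure True g}"
  have "G \<subseteq> polys" using GBp by (auto simp: G_def)
  moreover have "H \<subseteq> polys" using GBp pstar_polys by (auto simp: H_def)
  moreover have "\<forall>p\<in>G \<union> H. analytic_poly p"
    using pure_pstar[of True] by (auto simp: G_def H_def analytic_pure)
  moreover have "GB = G \<union> pstar cj ` H"
  proof
    show "GB \<subseteq> G \<union> pstar cj ` H"
    proof
      fix g assume g: "g \<in> GB"
      obtain b where "pure b g" using GB_pure[OF GB g] by blast
      then show "g \<in> G \<union> pstar cj ` H"
      proof (cases b)
        case True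
        then have "g = pstar cj (pstar cj g)" "pstar cj g \<in> H" using g \<open>pure b g\<close> by (auto simp: H_def)
        then show ?thesis by blast
      next
        case False then show ?thesis using g \<open>pure b g\<close> by (auto simp: G_def)
      qed
    qed
    show "G \<union> pstar cj ` H \<subseteq> GB" by (auto simp: G_def H_def image_image)
  qed
  ultimately show ?thesis by blast
qed

end


theorem proposition4p1:
  fixes lt :: "('v::finite) word \<Rightarrow> 'v word \<Rightarrow> bool"
  assumes "monomial_order lt"
  shows
   "(\<forall>(S :: ('v word \<Rightarrow> real) set) GB.
       (\<forall>p\<in>S. p \<in> polys \<and> p \<noteq> pzero \<and> analytic_poly p) \<and>
       reduced_groebner_basis lt (star_ideal_generated (\<lambda>x. x) S) GB \<longrightarrow>
       (\<exists>G H. G \<subseteq> polys \<and> H \<subseteq> polys \<and> (\<forall>p\<in>G \<union> H. analytic_poly p) \<and>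
              GB = G \<union> pstar (\<lambda>x. x) ` H)) \<and>
    (\<forall>(S :: ('v word \<Rightarrow> complex) set) GB.
       (\<forall>p\<in>S. p \<in> polys \<and> p \<noteq> pzero \<and> analytic_poly p) \<and>
       reduced_groebner_basis lt (star_ideal_generated cnj S) GB \<longrightarrow>
       (\<exists>G H. G \<subseteq> polys \<and> H \<subseteq> polys \<and> (\<forall>p\<in>G \<union> H. analytic_poly p) \<and>
              GB = G \<union> pstar cnj ` H))"
proof (intro conjI allI impI)
  fix S :: "('v word \<Rightarrow> real) set" and GB
  assume h: "(\<forall>p\<in>S. p \<in> polys \<and> p \<noteq> pzero \<and> analytic_poly p) \<and>
       reduced_groebner_basis lt (star_ideal_generated (\<lambda>x. x) S) GB"
  interpret gset lt "\<lambda>x::real. x" S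
    using assms h by unfold_locales auto
  show "\<exists>G H. G \<subseteq> polys \<and> H \<subseteq> polys \<and> (\<forall>p\<in>G \<union> H. analytic_poly p) \<and>
              GB = G \<union> pstar (\<lambda>x. x) ` H"
    using result h by (simp add: I_def)
next
  fix S :: "('v word \<Rightarrow> complex) set" and GB
  assume h: "(\<forall>p\<in>S. p \<in> polys \<and> p \<noteq> pzero \<and> analytic_poly p) \<and>
       reduced_groebner_basis lt (star_ideal_generated cnj S) GB"
  interpret gset lt cnj S
    using assms h by unfold_locales auto
  show "\<exists>G H. G \<subseteq> polys \<and> H \<subseteq> polys \<and> (\<forall>p\<in>G \<union> H. analytic_poly p) \<and>
              GB = G \<union> pstar cnj ` H"
    using result h by (simp add: I_def)
qed

end
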